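(* On the unit sphere with spherical coordinates $(\varphi,\theta)$ (longitude $\varphi$, polar angle $\theta$, metric $\sin^2\theta\,d\varphi^2+d\theta^2$), let $0<R<\pi/2$ and let $\gamma_\varepsilon(t)=(t+\varepsilon u(t),\,R+\varepsilon v(t))$ be an infinitesimal deformation of the circle of latitude $\gamma_0(t)=(t,R)$, where $u,v$ are smooth $2\pi$-periodic functions. Fix $\alpha\in(0,\pi)$ and define $f_\varepsilon(t)\in(0,\pi)$ by $\sin\alpha\cot f_\varepsilon(t)=\kappa_\varepsilon(t)$, where $\kappa_\varepsilon(t)$ is the geodesic curvature of $\gamma_\varepsilon$ at $\gamma_\varepsilon(t)$, and write $f_\varepsilon(t)=f_0+\varepsilon g(t)+O(\varepsilon^2)$. Then $g$ is $L^2$-orthogonal to the first harmonics: $\int_0^{2\pi}g(t)\cos t\,dt=\int_0^{2\pi}g(t)\sin t\,dt=0$.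
   Context: All quantities are computed to first order in $\varepsilon$. $f_0$ is the constant with $\sin\alpha\cot f_0=\cot R$, the geodesic curvature of the circle $\gamma_0$. *)

theory Defs
  imports "HOL-Analysis.Analysis" "HOL-Analysis.Cross3" "HOL-Library.Landau_Symbols"
begin

definition smooth_fun :: "(real \<Rightarrow> real) \<Rightarrow> bool" where
  "smooth_fun u \<longleftrightarrow> (\<forall>n x. (deriv ^^ n) u differentiable (at x))"

definition sph :: "real \<Rightarrow> real \<Rightarrow> real^3" where
  "sph \<phi> \<theta> = vector [sin \<theta> * cos \<phi>, sin \<theta> * sin \<phi>, cos \<theta>]"

text \<open>Geodesic curvature of a regular curve c on the unit sphere (outer unit normal N = c):
  kappa_g = <c'', N x c'> / |c'|^3.\<close>
definition geod_curv :: "(real \<Rightarrow> real^3) \<Rightarrow> real \<Rightarrow> real" where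
  "geod_curv c t =
     (vector_derivative (\<lambda>s. vector_derivative c (at s)) (at t) \<bullet> cross3 (c t) (vector_derivative c (at t)))
     / norm (vector_derivative c (at t)) ^ 3"

definition deformed_curve :: "real \<Rightarrow> (real \<Rightarrow> real) \<Rightarrow> (real \<Rightarrow> real) \<Rightarrow> real \<Rightarrow> real \<Rightarrow> real^3" where
  "deformed_curve R u v \<epsilon> t = sph (t + \<epsilon> * u t) (R + \<epsilon> * v t)"

definition arccot :: "real \<Rightarrow> real" where
  "arccot x = pi / 2 - arctan x"

definition fdef :: "real \<Rightarrow> real \<Rightarrow> (real \<Rightarrow> real) \<Rightarrow> (real \<Rightarrow> real) \<Rightarrow> real \<Rightarrow> real \<Rightarrow> real" where
  "fdef \<alpha> R u v \<epsilon> t = arccot (geod_curv (deformed_curve R u v \<epsilon>) t / sin \<alpha>)"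

end

theory Submission
  imports Defs
begin


lemma vec3_split: "(vector [a, b, c] :: real^3) = a *\<^sub>R axis 1 1 + b *\<^sub>R axis 2 1 + c *\<^sub>R axis 3 1"
  by (simp add: vec_eq_iff forall_3 axis_def)
lemma sc: fixes c :: "real^3" assumes "(k has_real_derivative k') (at x)"
  shows "((\<lambda>t. k t *\<^sub>R c) has_vector_derivative k' *\<^sub>R c) (at x)"
proof -
  have "((\<lambda>t. k t *\<^sub>R c) has_vector_derivative k x *\<^sub>R 0 + k' *\<^sub>R c) (at x)"
    by (rule has_vector_derivative_scaleR[OF assms has_vector_derivative_const])
  then show ?thesis by simp
qed
lemma vec3_deriv:
  assumes "(f has_real_derivative f') (at x)" "(g has_real_derivative g') (at x)" "(h has_real_derivative h') (at x)"
  shows "((\<lambda>t. vector [f t, g t, h t] :: real^3) has_vector_derivative vector [f', g', h']) (at x)"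
  unfolding vec3_split
  by (rule has_vector_derivative_add[OF has_vector_derivative_add[OF sc[OF assms(1)] sc[OF assms(2)]] sc[OF assms(3)]])

lemma dot1: fixes a b c d th1 p1 :: real assumes "a^2+b^2=1" "c^2+d^2 = 1"
 shows "vector [d * th1 * b - c * a * p1, d * th1 * a + c * b * p1, - c * th1] \<bullet>
        (vector [d * th1 * b - c * a * p1, d * th1 * a + c * b * p1, - c * th1] :: real^3) = th1^2 + c^2*p1^2"
  using assms by (simp add: cross3_simps) algebra

lemma dot2: fixes a b c d th1 p1 :: real assumes "a^2+b^2=1" "c^2+d^2 = 1"
 shows "(vector [
   - c * th1^2 * b + d * th2 * b - d * th1 * a * p1 - (d * th1 * a * p1 + c * b * p1^2 + c * a * p2),
   - c * th1^2 * a + d * th2 * a + d * th1 * b * p1 + d * th1 * b * p1 - c * a * p1^2 + c * b * p2,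
   - d * th1^2 - c * th2] :: real^3) \<bullet> cross3 (vector [c * b, c * a, d])
   (vector [d * th1 * b - c * a * p1, d * th1 * a + c * b * p1, - c * th1]) =
   c * (th1 * p2 - p1 * th2) + d * p1 * (2 * th1^2 + c^2 * p1^2)"
  using assms by (simp add: cross3_simps) algebra

definition C1 :: "real \<Rightarrow> real \<Rightarrow> real \<Rightarrow> real \<Rightarrow> real^3" where
 "C1 p p1 th th1 = vector [cos th * th1 * cos p - sin th * sin p * p1,
                            cos th * th1 * sin p + sin th * cos p * p1, - sin th * th1]"
definition C2 :: "real \<Rightarrow> real \<Rightarrow> real \<Rightarrow> real \<Rightarrow> real \<Rightarrow> real \<Rightarrow> real^3" where
 "C2 p p1 p2 th th1 th2 = vector [
   - sin th * th1^2 * cos p + cos th * th2 * cos p - cos th * th1 * sin p * p1 - (cos th * th1 * sin p * p1 + sin th * cos p * p1^2 + sin th * sin p * p2),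
   - sin th * th1^2 * sin p + cos th * th2 * sin p + cos th * th1 * cos p * p1 + cos th * th1 * cos p * p1 - sin th * sin p * p1^2 + sin th * cos p * p2,
   - cos th * th1^2 - sin th * th2]"

definition Kf :: "real \<Rightarrow> real \<Rightarrow> real \<Rightarrow> real \<Rightarrow> real \<Rightarrow> real" where
 "Kf p1 p2 th th1 th2 = (sin th * (th1 * p2 - p1 * th2) + cos th * p1 * (2 * th1^2 + (sin th)^2 * p1^2))
     / sqrt (th1^2 + (sin th)^2 * p1^2) ^ 3"

lemma curve_geod:
  assumes dp: "\<And>t. (p has_real_derivative p1 t) (at t)" "\<And>t. (p1 has_real_derivative p2 t) (at t)"
    and dth: "\<And>t. (th has_real_derivative th1 t) (at t)" "\<And>t. (th1 has_real_derivative th2 t) (at t)"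
  shows "geod_curv (\<lambda>t. sph (p t) (th t)) t = Kf (p1 t) (p2 t) (th t) (th1 t) (th2 t)"
proof -
  have d1: "((\<lambda>t. sph (p t) (th t)) has_vector_derivative C1 (p s) (p1 s) (th s) (th1 s)) (at s)" for s
    unfolding sph_def C1_def
    by (intro vec3_deriv) (rule derivative_eq_intros dp dth refl | simp add: algebra_simps)+
  have d2: "((\<lambda>s. C1 (p s) (p1 s) (th s) (th1 s)) has_vector_derivative C2 (p s) (p1 s) (p2 s) (th s) (th1 s) (th2 s)) (at s)" for s
    unfolding C2_def C1_def
    by (intro vec3_deriv) (rule derivative_eq_intros dp dth refl | simp add: algebra_simps power2_eq_square)+
  have v1: "vector_derivative (\<lambda>t. sph (p t) (th t)) (at s) = C1 (p s) (p1 s) (th s) (th1 s)" for s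
    by (rule vector_derivative_at[OF d1])
  have v2: "vector_derivative (\<lambda>s. vector_derivative (\<lambda>t. sph (p t) (th t)) (at s)) (at t)
      = C2 (p t) (p1 t) (p2 t) (th t) (th1 t) (th2 t)"
    unfolding v1 by (rule vector_derivative_at[OF d2])
  have n: "norm (C1 (p t) (p1 t) (th t) (th1 t)) = sqrt ((th1 t)^2 + (sin (th t))^2 * (p1 t)^2)"
    unfolding norm_eq_sqrt_inner C1_def by (subst dot1) simp_all
  have dd: "C2 (p t) (p1 t) (p2 t) (th t) (th1 t) (th2 t) \<bullet> cross3 (sph (p t) (th t)) (C1 (p t) (p1 t) (th t) (th1 t))
     = sin (th t) * (th1 t * p2 t - p1 t * th2 t) + cos (th t) * p1 t * (2 * (th1 t)^2 + (sin (th t))^2 * (p1 t)^2)"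
    unfolding C2_def C1_def sph_def by (subst dot2) simp_all
  show ?thesis unfolding geod_curv_def v2 unfolding v1 n dd Kf_def ..
qed


lemma polyid: fixes s c :: real assumes "s^2 + c^2 = 1"
  shows "(- s * b2 - s ^3 * b + 3 * c * s ^2 * a1 + 2 * s * c ^2 * b) * s ^ 3 - c * s ^ 2 * (3 * s / 2 * (2 * s * c * b + 2 * s ^2 * a1)) = -(b2 + b) * s ^ 4"
  using assms by algebra

lemma K_deriv:
  assumes "0 < R" "R < pi"
  shows "((\<lambda>e. Kf (1 + e*a1) (e*a2) (R + e*b) (e*b1) (e*b2)) has_real_derivative (-(b2 + b)/(sin R)^2)) (at 0)"
proof -
  have s: "sin R > 0" using assms by (simp add: sin_gt_zero)
  define N where "N e = sin (R + e*b) * (e*b1 * (e*a2) - (1 + e*a1) * (e*b2)) + cos (R+e*b) * (1+e*a1) * (2 * (e*b1)^2 + (sin (R+e*b))^2 * (1+e*a1)^2)" for e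
  define S where "S e = (e*b1)^2 + (sin (R+e*b))^2 * (1+e*a1)^2" for e
  define N' where "N' = - sin R * b2 - sin R ^3 * b + 3 * cos R * sin R ^2 * a1 + 2 * sin R * cos R ^2 * b"
  define S' where "S' = 2 * sin R * cos R * b + 2 * sin R ^2 * a1"
  have dN: "(N has_real_derivative N') (at 0)"
    unfolding N_def[abs_def] N'_def
    apply (rule derivative_eq_intros refl)+
    apply (simp add: algebra_simps power2_eq_square power3_eq_cube)
    done
  have dS: "(S has_real_derivative S') (at 0)"
    unfolding S_def[abs_def] S'_def
    apply (rule derivative_eq_intros refl)+
    apply (simp add: algebra_simps power2_eq_square)
    done
  have S0: "S 0 = sin R ^ 2" by (simp add: S_def)
  have S0p: "0 < S 0" using s S0 by simp
  have dq: "((\<lambda>e. sqrt (S e)) has_real_derivative (inverse (sqrt (S 0)) / 2 * S')) (at 0)"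
    by (rule DERIV_chain2[OF DERIV_real_sqrt[OF S0p] dS])
  have sq: "sqrt (S 0) = sin R" using S0 s by simp
  have dD: "((\<lambda>e. sqrt (S e) ^ 3) has_real_derivative (3 * sin R / 2 * S')) (at 0)"
    using DERIV_power[OF dq, of 3] unfolding sq using s by (simp add: field_simps power2_eq_square)
  have N0: "N 0 = cos R * sin R ^ 2" by (simp add: N_def)
  have eq: "(\<lambda>e. Kf (1 + e*a1) (e*a2) (R + e*b) (e*b1) (e*b2)) = (\<lambda>e. N e / sqrt (S e) ^ 3)"
    by (simp add: Kf_def N_def S_def)
  have dK: "((\<lambda>e. N e / sqrt (S e) ^ 3) has_real_derivative
     (N' * sqrt (S 0) ^ 3 - N 0 * (3 * sin R / 2 * S')) / (sqrt (S 0) ^ 3 * sqrt (S 0) ^ 3)) (at 0)"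
    by (rule DERIV_divide[OF dN dD]) (use sq s in simp)
  have c2: "cos R ^ 2 = 1 - sin R ^ 2" by (simp add: cos_squared_eq)
  have val: "(N' * sqrt (S 0) ^ 3 - N 0 * (3 * sin R / 2 * S')) / (sqrt (S 0) ^ 3 * sqrt (S 0) ^ 3) = -(b2 + b)/(sin R)^2"
  proof -
    have poly: "N' * sin R ^ 3 - cos R * sin R ^ 2 * (3 * sin R / 2 * S') = -(b2 + b) * sin R ^ 4"
      unfolding N'_def S'_def by (rule polyid) simp
    show ?thesis unfolding sq N0 poly using s by (simp add: field_simps eval_nat_numeral)
  qed
  show ?thesis unfolding eq using dK val by simp
qed

lemma F_deriv:
  assumes "(K has_real_derivative K') (at 0)"
  shows "((\<lambda>e. arccot (K e / c)) has_real_derivative -(inverse (1 + (K 0 / c)^2) * (K' / c))) (at 0)"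
proof -
  have "((\<lambda>e. K e / c) has_real_derivative K' / c) (at 0)" using assms by (rule DERIV_cdivide)
  then have "((\<lambda>e. arctan (K e / c)) has_real_derivative inverse (1 + (K 0 / c)^2) * (K' / c)) (at 0)"
    by (rule DERIV_chain2[OF DERIV_arctan])
  from DERIV_diff[OF DERIV_const this] show ?thesis unfolding arccot_def by simp
qed

lemma lin_unique:
  fixes F :: "real \<Rightarrow> real"
  assumes "(F has_real_derivative D) (at 0)" "(\<lambda>e. F e - F 0 - e * g) \<in> O[at 0](\<lambda>e. e^2)"
  shows "g = D"
proof -
  have o: "(\<lambda>e::real. e^2) \<in> o[at 0](\<lambda>e. e)"
  proof (rule smalloI_tendsto)
    show "((\<lambda>e::real. e^2 / e) \<longlongrightarrow> 0) (at 0)" by (simp add: power2_eq_square)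
    show "\<forall>\<^sub>F x in at (0::real). x \<noteq> 0" by (rule eventually_neq_at_within)
  qed
  have h: "(\<lambda>e. F e - F 0 - e * g) \<in> o[at 0](\<lambda>e. e)" by (rule landau_o.big_small_trans[OF assms(2) o])
  then have l1: "((\<lambda>e. (F e - F 0 - e * g) / e) \<longlongrightarrow> 0) (at 0)" by (rule smalloD_tendsto)
  have l2: "((\<lambda>e. (F e - F 0) / (e - 0)) \<longlongrightarrow> D) (at 0)" using assms(1) by (simp add: has_field_derivative_iff)
  then have l3: "((\<lambda>e. (F e - F 0) / (e - 0) - g) \<longlongrightarrow> D - g) (at 0)" by (intro tendsto_diff tendsto_const)
  have ev: "\<forall>\<^sub>F e in at (0::real). (F e - F 0) / (e - 0) - g = (F e - F 0 - e * g) / e"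
    using eventually_neq_at_within[of 0 0 UNIV] by eventually_elim (simp add: field_simps)
  have "((\<lambda>e. (F e - F 0 - e * g) / e) \<longlongrightarrow> D - g) (at 0)" using tendsto_cong[OF ev] l3 by simp
  from tendsto_unique[OF _ this l1] have "D - g = 0" by simp
  then show ?thesis by simp
qed

lemma per_deriv:
  assumes "\<forall>t. v (t + 2 * pi) = v t" "\<And>x. (v has_real_derivative v1 x) (at x)"
  shows "v1 (2 * pi) = v1 0"
proof -
  have "((\<lambda>t. v (t + 2*pi)) has_real_derivative v1 (0 + 2*pi) * 1) (at 0)"
    by (rule DERIV_chain2[OF assms(2)]) (rule derivative_eq_intros refl | simp)+
  moreover have "(\<lambda>t. v (t + 2*pi)) = v" using assms(1) by auto
  ultimately have "(v has_real_derivative v1 (2*pi)) (at 0)" by simp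
  from DERIV_unique[OF this assms(2)] show ?thesis .
qed

lemma int_zero:
  assumes per: "\<forall>t. v (t + 2 * pi) = v t"
    and dv: "\<And>x. (v has_real_derivative v1 x) (at x)" and dv1: "\<And>x. (v1 has_real_derivative v2 x) (at x)"
    and gf: "\<And>t. g t = A * (v2 t + v t)"
  shows "integral {0..2 * pi} (\<lambda>t. g t * cos t) = 0 \<and> integral {0..2 * pi} (\<lambda>t. g t * sin t) = 0"
proof -
  have p1: "v1 (2 * pi) = v1 0" by (rule per_deriv[OF per dv])
  have p0: "v (2 * pi) = v 0" using per[rule_format, of 0] by simp
  have "((\<lambda>t. g t * cos t) has_integral
     ((\<lambda>t. A * (v1 t * cos t + v t * sin t)) (2*pi) - (\<lambda>t. A * (v1 t * cos t + v t * sin t)) 0)) {0..2*pi}"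
  proof (rule fundamental_theorem_of_calculus)
    fix x :: real
    have "((\<lambda>t. A * (v1 t * cos t + v t * sin t)) has_real_derivative g x * cos x) (at x)"
      by (rule derivative_eq_intros refl dv dv1 | simp add: gf algebra_simps)+
    then show "((\<lambda>t. A * (v1 t * cos t + v t * sin t)) has_vector_derivative g x * cos x) (at x within {0..2*pi})"
      by (simp add: has_real_derivative_iff_has_vector_derivative has_vector_derivative_at_within)
  qed simp
  then have i1: "integral {0..2 * pi} (\<lambda>t. g t * cos t) = 0" using p1 by (simp add: integral_unique)
  have "((\<lambda>t. g t * sin t) has_integral
     ((\<lambda>t. A * (v1 t * sin t - v t * cos t)) (2*pi) - (\<lambda>t. A * (v1 t * sin t - v t * cos t)) 0)) {0..2*pi}"
  proof (rule fundamental_theorem_of_calculus)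
    fix x :: real
    have "((\<lambda>t. A * (v1 t * sin t - v t * cos t)) has_real_derivative g x * sin x) (at x)"
      by (rule derivative_eq_intros refl dv dv1 | simp add: gf algebra_simps)+
    then show "((\<lambda>t. A * (v1 t * sin t - v t * cos t)) has_vector_derivative g x * sin x) (at x within {0..2*pi})"
      by (simp add: has_real_derivative_iff_has_vector_derivative has_vector_derivative_at_within)
  qed simp
  then have i2: "integral {0..2 * pi} (\<lambda>t. g t * sin t) = 0" using p0 by (simp add: integral_unique)
  from i1 i2 show ?thesis ..
qed


theorem mainTheorem7:
  fixes R \<alpha> :: real and u v g :: "real \<Rightarrow> real"
  assumes "0 < R" "R < pi / 2"
    and "smooth_fun u" "smooth_fun v"
    and "\<forall>t. u (t + 2 * pi) = u t" "\<forall>t. v (t + 2 * pi) = v t"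
    and "0 < \<alpha>" "\<alpha> < pi"
    and "\<forall>t. (\<lambda>\<epsilon>. fdef \<alpha> R u v \<epsilon> t - fdef \<alpha> R u v 0 t - \<epsilon> * g t) \<in> O[at 0](\<lambda>\<epsilon>. \<epsilon> ^ 2)"
  shows "integral {0..2 * pi} (\<lambda>t. g t * cos t) = 0
       \<and> integral {0..2 * pi} (\<lambda>t. g t * sin t) = 0"
proof -
  define u1 where "u1 = deriv u"
  define u2 where "u2 = deriv u1"
  define v1 where "v1 = deriv v"
  define v2 where "v2 = deriv v1"
  have du: "(u has_real_derivative u1 x) (at x)" for x
  proof -
    have "(deriv ^^ 0) u differentiable (at x)" using assms(3) unfolding smooth_fun_def by blast
    then show ?thesis unfolding u1_def by (simp add: DERIV_deriv_iff_real_differentiable)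
  qed
  have du1: "(u1 has_real_derivative u2 x) (at x)" for x
  proof -
    have "(deriv ^^ Suc 0) u differentiable (at x)" using assms(3) unfolding smooth_fun_def by blast
    then show ?thesis unfolding u2_def u1_def by (simp add: DERIV_deriv_iff_real_differentiable)
  qed
  have dv: "(v has_real_derivative v1 x) (at x)" for x
  proof -
    have "(deriv ^^ 0) v differentiable (at x)" using assms(4) unfolding smooth_fun_def by blast
    then show ?thesis unfolding v1_def by (simp add: DERIV_deriv_iff_real_differentiable)
  qed
  have dv1: "(v1 has_real_derivative v2 x) (at x)" for x
  proof -
    have "(deriv ^^ Suc 0) v differentiable (at x)" using assms(4) unfolding smooth_fun_def by blast
    then show ?thesis unfolding v2_def v1_def by (simp add: DERIV_deriv_iff_real_differentiable)
  qed
  have fd: "fdef \<alpha> R u v e t = arccot (Kf (1 + e * u1 t) (e * u2 t) (R + e * v t) (e * v1 t) (e * v2 t) / sin \<alpha>)" for e t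
  proof -
    have dc: "deformed_curve R u v e = (\<lambda>s. sph (s + e * u s) (R + e * v s))"
      by (rule ext) (simp add: deformed_curve_def)
    have a1: "((\<lambda>s. s + e * u s) has_real_derivative 1 + e * u1 s) (at s)" for s
      by (rule derivative_eq_intros refl du | simp)+
    have a2: "((\<lambda>s. 1 + e * u1 s) has_real_derivative e * u2 s) (at s)" for s
      by (rule derivative_eq_intros refl du1 | simp)+
    have a3: "((\<lambda>s. R + e * v s) has_real_derivative e * v1 s) (at s)" for s
      by (rule derivative_eq_intros refl dv | simp)+
    have a4: "((\<lambda>s. e * v1 s) has_real_derivative e * v2 s) (at s)" for s
      by (rule derivative_eq_intros refl dv1 | simp)+
    have "geod_curv (\<lambda>s. sph (s + e * u s) (R + e * v s)) t = Kf (1 + e * u1 t) (e * u2 t) (R + e * v t) (e * v1 t) (e * v2 t)"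
      using curve_geod[OF a1 a2 a3 a4] by simp
    then show ?thesis unfolding fdef_def dc by simp
  qed
  have Rpi: "R < pi" using assms(2) pi_gt_zero by linarith
  have sR: "sin R > 0" using assms(1) Rpi by (simp add: sin_gt_zero)
  have sa: "sin \<alpha> > 0" using assms(7,8) by (simp add: sin_gt_zero)
  define A where "A = inverse (1 + (Kf 1 0 R 0 0 / sin \<alpha>)^2) / ((sin R)^2 * sin \<alpha>)"
  have gf: "g t = A * (v2 t + v t)" for t
  proof -
    have dK: "((\<lambda>e. Kf (1 + e * u1 t) (e * u2 t) (R + e * v t) (e * v1 t) (e * v2 t)) has_real_derivative (-(v2 t + v t)/(sin R)^2)) (at 0)"
      by (rule K_deriv[OF assms(1) Rpi])
    have dF: "((\<lambda>e. fdef \<alpha> R u v e t) has_real_derivative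
        -(inverse (1 + (Kf 1 0 R 0 0 / sin \<alpha>)^2) * ((-(v2 t + v t)/(sin R)^2) / sin \<alpha>))) (at 0)"
      using F_deriv[OF dK, of "sin \<alpha>"] unfolding fd by simp
    have "g t = -(inverse (1 + (Kf 1 0 R 0 0 / sin \<alpha>)^2) * ((-(v2 t + v t)/(sin R)^2) / sin \<alpha>))"
      by (rule lin_unique[OF dF]) (use assms(9) in simp)
    also have "\<dots> = A * (v2 t + v t)"
      unfolding A_def by (simp add: divide_inverse inverse_mult_distrib algebra_simps)
    finally show ?thesis .
  qed
  show ?thesis by (rule int_zero[OF assms(6) dv dv1 gf])
qed

end
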